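(* Let $A[0..m-1]$ and $B[0..n-1]$ be arrays sorted with respect to a total preorder $\leq$ on keys, and let $p\geq 1$ processing elements with shared access to $A$, $B$ and an output array $C[0..m+n-1]$ execute the parallel merge algorithm described in the context. Then afterwards $C=\mathsf{stable\_merge}(A,B,\leq)$ (the merge is stable), the number of elements merged by each processing element is at most $\lceil (m+n)/p\rceil$, and the total time complexity is $\mathcal{O}\!\left(\frac{n+m}{p}+\log\min(m,n)\right)$.
   Context: $\mathsf{stable\_merge}(X,Y,\leq)$ is the sorted merge of $X$ and $Y$ preserving the relative order within each array and placing elements of $X$ before equal-keyed elements of $Y$; a sequential stable merge of arrays of lengths $a,b$ running in $\mathcal{O}(a+b)$ time is assumed available. For $0\le i\le m+n$, the co-ranks of $i$ are the unique $(j,k)$ with $0\le j\le m$, $0\le k\le n$, $j+k=i$, ($j=0$ or $A[j-1]\leq B[k]$) and ($k=0$ or $B[k-1]<A[j]$) (with sentinels $A[m]=B[n]=+\infty$); they are computed by the procedure $\mathsf{co\_rank}$: set $j\gets\min(i,m)$, $k\gets i-j$, $j_{\rm low}\gets\max(0,i-n)$; repeat: if $j>0$, $k<n$ and $A[j-1]>B[k]$ then $\delta\gets\lceil (j-j_{\rm low})/2\rceil$, $k_{\rm low}\gets k$, $j\gets j-\delta$, $k\gets k+\delta$; else if $k>0$, $j<m$ and $B[k-1]\geq A[j]$ then $\delta\gets\lceil (k-k_{\rm low})/2\rceil$, $j_{\rm low}\gets j$, $j\gets j+\delta$, $k\gets k-\delta$; else stop and return $(j,k)$. Parallel merge algorithm: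 processing element $r$, $0\le r<p$, independently computes $i_r=\lfloor r(m+n)/p\rfloor$ and $i_{r+1}=\lfloor (r+1)(m+n)/p\rfloor$, computes $(j_r,k_r)=\mathsf{co\_rank}(i_r,A,m,B,n,\leq)$ and $(j_{r+1},k_{r+1})=\mathsf{co\_rank}(i_{r+1},A,m,B,n,\leq)$, and then sequentially stably merges $A[j_r,\ldots,j_{r+1}-1]$ and $B[k_r,\ldots,k_{r+1}-1]$ into $C[i_r,\ldots,i_{r+1}-1]$. *)

theory Defs
  imports Complex_Main "HOL-Library.While_Combinator"
begin

definition total_preorder :: "('a \<Rightarrow> 'a \<Rightarrow> bool) \<Rightarrow> bool" where
  "total_preorder le \<longleftrightarrow> (\<forall>x y. le x y \<or> le y x) \<and> (\<forall>x y z. le x y \<longrightarrow> le y z \<longrightarrow> le x z)"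

fun stable_merge :: "('a \<Rightarrow> 'a \<Rightarrow> bool) \<Rightarrow> 'a list \<Rightarrow> 'a list \<Rightarrow> 'a list" where
  "stable_merge le [] ys = ys"
| "stable_merge le xs [] = xs"
| "stable_merge le (x # xs) (y # ys) =
     (if le x y then x # stable_merge le xs (y # ys) else y # stable_merge le (x # xs) ys)"

type_synonym cr_state = "nat \<times> nat \<times> nat \<times> nat"

definition cr_branch1 :: "('a \<Rightarrow> 'a \<Rightarrow> bool) \<Rightarrow> 'a list \<Rightarrow> 'a list \<Rightarrow> cr_state \<Rightarrow> bool" where
  "cr_branch1 le A B s = (case s of (j, k, jl, kl) \<Rightarrow>
     0 < j \<and> k < length B \<and> \<not> le (A ! (j - 1)) (B ! k))"

definition cr_branch2 :: "('a \<Rightarrow> 'a \<Rightarrow> bool) \<Rightarrow> 'a list \<Rightarrow> 'a list \<Rightarrow> cr_state \<Rightarrow> bool" where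
  "cr_branch2 le A B s = (case s of (j, k, jl, kl) \<Rightarrow>
     0 < k \<and> j < length A \<and> le (A ! j) (B ! (k - 1)))"

definition cr_cont :: "('a \<Rightarrow> 'a \<Rightarrow> bool) \<Rightarrow> 'a list \<Rightarrow> 'a list \<Rightarrow> cr_state \<Rightarrow> bool" where
  "cr_cont le A B s \<longleftrightarrow> cr_branch1 le A B s \<or> cr_branch2 le A B s"

text \<open>One loop iteration. delta = ceil(x/2) = (x + 1) div 2.\<close>
definition cr_body :: "('a \<Rightarrow> 'a \<Rightarrow> bool) \<Rightarrow> 'a list \<Rightarrow> 'a list \<Rightarrow> cr_state \<Rightarrow> cr_state" where
  "cr_body le A B s = (case s of (j, k, jl, kl) \<Rightarrow>
     if cr_branch1 le A B s then
       (let d = (j - jl + 1) div 2 in (j - d, k + d, jl, k))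
     else if cr_branch2 le A B s then
       (let d = (k - kl + 1) div 2 in (j + d, k - d, j, kl))
     else s)"

definition cr_init :: "'a list \<Rightarrow> 'a list \<Rightarrow> nat \<Rightarrow> cr_state" where
  "cr_init A B i = (min i (length A), i - min i (length A), i - length B, i - length A)"

definition co_rank :: "('a \<Rightarrow> 'a \<Rightarrow> bool) \<Rightarrow> nat \<Rightarrow> 'a list \<Rightarrow> 'a list \<Rightarrow> (nat \<times> nat) option" where
  "co_rank le i A B =
     map_option (\<lambda>(j, k, jl, kl). (j, k)) (while_option (cr_cont le A B) (cr_body le A B) (cr_init A B i))"

definition co_rank_steps :: "('a \<Rightarrow> 'a \<Rightarrow> bool) \<Rightarrow> nat \<Rightarrow> 'a list \<Rightarrow> 'a list \<Rightarrow> nat" where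
  "co_rank_steps le i A B = (LEAST t. \<not> cr_cont le A B ((cr_body le A B ^^ t) (cr_init A B i)))"

definition seg_bound :: "nat \<Rightarrow> nat \<Rightarrow> nat \<Rightarrow> nat" where
  "seg_bound N p r = r * N div p"

definition pe_corank :: "('a \<Rightarrow> 'a \<Rightarrow> bool) \<Rightarrow> 'a list \<Rightarrow> 'a list \<Rightarrow> nat \<Rightarrow> nat \<Rightarrow> nat \<times> nat" where
  "pe_corank le A B p r = the (co_rank le (seg_bound (length A + length B) p r) A B)"

definition slice :: "'a list \<Rightarrow> nat \<Rightarrow> nat \<Rightarrow> 'a list" where
  "slice xs a b = take (b - a) (drop a xs)"

definition pe_output :: "('a \<Rightarrow> 'a \<Rightarrow> bool) \<Rightarrow> 'a list \<Rightarrow> 'a list \<Rightarrow> nat \<Rightarrow> nat \<Rightarrow> 'a list" where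
  "pe_output le A B p r =
     (let (j0, k0) = pe_corank le A B p r; (j1, k1) = pe_corank le A B p (Suc r)
      in stable_merge le (slice A j0 j1) (slice B k0 k1))"

definition pe_work :: "('a \<Rightarrow> 'a \<Rightarrow> bool) \<Rightarrow> 'a list \<Rightarrow> 'a list \<Rightarrow> nat \<Rightarrow> nat \<Rightarrow> nat" where
  "pe_work le A B p r =
     (let (j0, k0) = pe_corank le A B p r; (j1, k1) = pe_corank le A B p (Suc r)
      in (j1 - j0) + (k1 - k0))"

text \<open>Output array C: PE r writes its merged segment into C[i_r..i_{r+1}-1]; C is the
  concatenation of these segments in order of r.\<close>
definition par_merge :: "('a \<Rightarrow> 'a \<Rightarrow> bool) \<Rightarrow> 'a list \<Rightarrow> 'a list \<Rightarrow> nat \<Rightarrow> 'a list" where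
  "par_merge le A B p = concat (map (pe_output le A B p) [0..<p])"

text \<open>Cost model for processing element r: one unit of setup, one unit per co_rank loop
  iteration (both calls), and one unit per merged element (linear sequential merge).\<close>
definition pe_time :: "('a \<Rightarrow> 'a \<Rightarrow> bool) \<Rightarrow> 'a list \<Rightarrow> 'a list \<Rightarrow> nat \<Rightarrow> nat \<Rightarrow> nat" where
  "pe_time le A B p r =
     1 + co_rank_steps le (seg_bound (length A + length B) p r) A B
       + co_rank_steps le (seg_bound (length A + length B) p (Suc r)) A B
       + pe_work le A B p r"

end

theory Submission
  imports Defs
begin


lemma tp_refl: "total_preorder le \<Longrightarrow> le x x"
  unfolding total_preorder_def by blast
lemma tp_trans: "total_preorder le \<Longrightarrow> le x y \<Longrightarrow> le y z \<Longrightarrow> le x z"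
  unfolding total_preorder_def by blast
lemma sorted_le: "total_preorder le \<Longrightarrow> sorted_wrt le xs \<Longrightarrow> a \<le> b \<Longrightarrow> b < length xs \<Longrightarrow> le (xs!a) (xs!b)"
  by (metis le_eq_less_or_eq sorted_wrt_nth_less tp_refl)

definition okp :: "('a \<Rightarrow> 'a \<Rightarrow> bool) \<Rightarrow> 'a list \<Rightarrow> 'a list \<Rightarrow> nat \<Rightarrow> nat \<Rightarrow> bool" where
  "okp le A B j k \<longleftrightarrow> (j = 0 \<or> k = length B \<or> le (A!(j-1)) (B!k)) \<and>
                       (k = 0 \<or> j = length A \<or> \<not> le (A!j) (B!(k-1)))"

lemma sm_Nil2[simp]: "stable_merge le xs [] = xs"
  by (cases xs) auto

lemma sm_length[simp]: "length (stable_merge le xs ys) = length xs + length ys"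
  by (induction le xs ys rule: stable_merge.induct) auto

lemma okp_shiftA: "okp le (x#xs) B j k \<Longrightarrow> 0 < j \<Longrightarrow> okp le xs B (j-1) k"
  unfolding okp_def by (cases j; cases "j - 1") auto

lemma okp_shiftB: "okp le A (y#ys) j k \<Longrightarrow> 0 < k \<Longrightarrow> okp le A ys j (k-1)"
  unfolding okp_def by (cases k; cases "k - 1") auto

lemma sm_split:
  "total_preorder le \<Longrightarrow> sorted_wrt le A \<Longrightarrow> sorted_wrt le B \<Longrightarrow> j \<le> length A \<Longrightarrow> k \<le> length B \<Longrightarrow> okp le A B j k \<Longrightarrow>
    stable_merge le A B = stable_merge le (take j A) (take k B) @ stable_merge le (drop j A) (drop k B)"
proof (induction le A B arbitrary: j k rule: stable_merge.induct)
  case (1 le ys)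
  then show ?case by simp
next
  case (2 le v va)
  then show ?case by simp
next
  case (3 le x xs y ys)
  show ?case
  proof (cases "j = 0 \<and> k = 0")
    case True then show ?thesis by simp
  next
  case jk: False
  show ?thesis
  proof (cases "le x y")
    case True
    have j0: "0 < j"
    proof (rule ccontr)
      assume "\<not> 0 < j"
      hence "j = 0" by simp
      show False
      proof (cases "k = 0")
        case True
        with \<open>j=0\<close> jk show False by simp
      next
        case False
        have "le y ((y#ys)!(k-1))" using sorted_le[OF 3(3) 3(5), of 0 "k-1"] 3(7) False by simp
        hence "le x ((y#ys)!(k-1))" using tp_trans[OF 3(3) True] by blast
        with 3(8) \<open>j=0\<close> False show False unfolding okp_def by simp
      qed
    qed
    have IH: "stable_merge le xs (y#ys) = stable_merge le (take (j-1) xs) (take k (y#ys)) @ stable_merge le (drop (j-1) xs) (drop k (y#ys))"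
      using 3(1)[OF True 3(3)] 3(4-8) j0 okp_shiftA[OF 3(8) j0] by simp
    have T: "stable_merge le (take j (x#xs)) (take k (y#ys)) = x # stable_merge le (take (j-1) xs) (take k (y#ys))"
      using j0 True by (cases j; cases k) auto
    have D: "drop j (x#xs) = drop (j-1) xs" using j0 by (cases j) auto
    show ?thesis using True IH T D by simp
  next
    case False
    have k0: "0 < k"
    proof (rule ccontr)
      assume "\<not> 0 < k"
      hence "k = 0" by simp
      hence "0 < j" using jk by simp
      have "le x ((x#xs)!(j-1))" using sorted_le[OF 3(3) 3(4), of 0 "j-1"] 3(6) \<open>0<j\<close> by simp
      moreover have "le ((x#xs)!(j-1)) y" using 3(8) \<open>k=0\<close> \<open>0<j\<close> unfolding okp_def by simp
      ultimately show False using tp_trans[OF 3(3)] False by blast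
    qed
    have IH: "stable_merge le (x#xs) ys = stable_merge le (take j (x#xs)) (take (k-1) ys) @ stable_merge le (drop j (x#xs)) (drop (k-1) ys)"
      using 3(2)[OF False 3(3)] 3(4-8) k0 okp_shiftB[OF 3(8) k0] by simp
    have T: "stable_merge le (take j (x#xs)) (take k (y#ys)) = y # stable_merge le (take j (x#xs)) (take (k-1) ys)"
      using k0 False by (cases j; cases k) auto
    have D: "drop k (y#ys) = drop (k-1) ys" using k0 by (cases k) auto
    show ?thesis using False IH T D by simp
  qed
  qed
qed

lemma okp_mono:
  assumes tp: "total_preorder le" and sA: "sorted_wrt le A" and sB: "sorted_wrt le B"
    and o1: "okp le A B j1 k1" and o2: "okp le A B j2 k2"
    and b: "j1 \<le> length A" "k1 \<le> length B" "j2 \<le> length A" "k2 \<le> length B"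
    and s: "j1 + k1 \<le> j2 + k2"
  shows "j1 \<le> j2 \<and> k1 \<le> k2"
proof (rule ccontr)
  assume "\<not> (j1 \<le> j2 \<and> k1 \<le> k2)"
  then consider "j2 < j1" | "j1 \<le> j2" "k2 < k1" by linarith
  then show False
  proof cases
    case 1
    hence "k1 < k2" using s by linarith
    have x: "le (A!(j1-1)) (B!k1)" using o1 1 \<open>k1<k2\<close> b unfolding okp_def by auto
    have y: "\<not> le (A!j2) (B!(k2-1))" using o2 1 \<open>k1<k2\<close> b unfolding okp_def by auto
    have "le (A!j2) (A!(j1-1))" using sorted_le[OF tp sA] 1 b by simp
    moreover have "le (B!k1) (B!(k2-1))" using sorted_le[OF tp sB] \<open>k1<k2\<close> b by simp
    ultimately show False using x y tp_trans[OF tp] by blast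
  next
    case 2
    hence "j1 < j2" using s by linarith
    have x: "le (A!(j2-1)) (B!k2)" using o2 2 \<open>j1<j2\<close> b unfolding okp_def by auto
    have y: "\<not> le (A!j1) (B!(k1-1))" using o1 2 \<open>j1<j2\<close> b unfolding okp_def by auto
    have "le (A!j1) (A!(j2-1))" using sorted_le[OF tp sA] 2 \<open>j1<j2\<close> b by simp
    moreover have "le (B!k2) (B!(k1-1))" using sorted_le[OF tp sB] 2 b by simp
    ultimately show False using x y tp_trans[OF tp] by blast
  qed
qed

lemma okp_drop:
  assumes "okp le A B j k" "j0 \<le> j" "k0 \<le> k" "j \<le> length A" "k \<le> length B"
  shows "okp le (drop j0 A) (drop k0 B) (j - j0) (k - k0)"
proof -
  have e1: "drop j0 A ! (j - j0 - 1) = A ! (j-1)" if "j0 < j" using that assms by (simp add: nth_drop)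
  have e2: "drop k0 B ! (k - k0) = B ! k" if "k < length B" using that assms by (simp add: nth_drop)
  have e3: "drop j0 A ! (j - j0) = A ! j" if "j < length A" using that assms by (simp add: nth_drop)
  have e4: "drop k0 B ! (k - k0 - 1) = B ! (k-1)" if "k0 < k" using that assms by (simp add: nth_drop)
  have c1: "j - j0 = 0 \<or> k - k0 = length (drop k0 B) \<or> le (drop j0 A ! (j - j0 - 1)) (drop k0 B ! (k - k0))"
  proof (cases "j0 < j \<and> k < length B")
    case True then show ?thesis using e1 e2 assms(1) unfolding okp_def by auto
  next
    case False then show ?thesis using assms by auto
  qed
  have c2: "k - k0 = 0 \<or> j - j0 = length (drop j0 A) \<or> \<not> le (drop j0 A ! (j - j0)) (drop k0 B ! (k - k0 - 1))"
  proof (cases "k0 < k \<and> j < length A")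
    case True then show ?thesis using e3 e4 assms(1) unfolding okp_def by auto
  next
    case False then show ?thesis using assms by auto
  qed
  show ?thesis using c1 c2 unfolding okp_def by blast
qed

lemma okp_full:
  assumes "j + k = length A + length B" "j \<le> length A" "k \<le> length B"
  shows "j = length A" "k = length B" using assms by linarith+



lemma half1: "(x::nat) - (x+1) div 2 \<le> (x+1) div 2" by linarith
lemma half2: "1 \<le> (x::nat) \<Longrightarrow> 1 \<le> (x+1) div 2 \<and> (x+1) div 2 \<le> x" by linarith


definition Inv :: "('a \<Rightarrow> 'a \<Rightarrow> bool) \<Rightarrow> 'a list \<Rightarrow> 'a list \<Rightarrow> nat \<Rightarrow> cr_state \<Rightarrow> bool" where
  "Inv le A B i s = (case s of (j,k,jl,kl) \<Rightarrow> j + k = i \<and> jl \<le> j \<and> kl \<le> k \<and> i - length B \<le> jl \<and> i - length A \<le> kl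
     \<and> (jl = i - length B \<or> cr_branch2 le A B (jl, i - jl, 0, 0))
     \<and> (kl = i - length A \<or> cr_branch1 le A B (i - kl, kl, 0, 0)))"

definition Dm :: "cr_state \<Rightarrow> nat" where
  "Dm s = (case s of (j,k,jl,kl) \<Rightarrow> max (j - jl) (k - kl))"

lemma chain:
  assumes tp: "total_preorder le" and sA: "sorted_wrt le A" and sB: "sorted_wrt le B"
    and b2: "cr_branch2 le A B (j0, k0, x, y)" and b1: "cr_branch1 le A B (j, k, u, v)"
    and s: "j0 + k0 = j + k"
  shows "j0 + 2 \<le> j"
proof (rule ccontr)
  assume "\<not> j0 + 2 \<le> j"
  have h2: "0 < k0" "j0 < length A" "le (A!j0) (B!(k0-1))" using b2 unfolding cr_branch2_def by auto
  have h1: "0 < j" "k < length B" "\<not> le (A!(j-1)) (B!k)" using b1 unfolding cr_branch1_def by auto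
  have "le (A!(j-1)) (A!j0)" using sorted_le[OF tp sA] h2 h1 \<open>\<not> j0 + 2 \<le> j\<close> by simp
  moreover have "le (B!(k0-1)) (B!k)" using sorted_le[OF tp sB] h2 h1 \<open>\<not> j0 + 2 \<le> j\<close> s by simp
  ultimately show False using h1 h2 tp_trans[OF tp] by blast
qed

lemma branch_indep:
  "cr_branch1 le A B (j,k,a,b) = cr_branch1 le A B (j,k,c,d)"
  "cr_branch2 le A B (j,k,a,b) = cr_branch2 le A B (j,k,c,d)"
  unfolding cr_branch1_def cr_branch2_def by auto

context
  fixes le and A B :: "'a list" and i
  assumes tp: "total_preorder le" and sA: "sorted_wrt le A" and sB: "sorted_wrt le B"
    and iN: "i \<le> length A + length B"
begin

lemma Inv_b1_gt:
  assumes "Inv le A B i (j,k,jl,kl)" "cr_branch1 le A B (j,k,jl,kl)"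
  shows "jl < j"
proof -
  from assms(1) have I: "j + k = i" "jl \<le> j" "i - length B \<le> jl"
     "jl = i - length B \<or> cr_branch2 le A B (jl, i - jl, 0, 0)" unfolding Inv_def by auto
  have h1: "0 < j" "k < length B" using assms(2) unfolding cr_branch1_def by auto
  from I(4) show ?thesis
  proof
    assume "jl = i - length B" then show ?thesis using I h1 by linarith
  next
    assume "cr_branch2 le A B (jl, i - jl, 0, 0)"
    from chain[OF tp sA sB this assms(2)] I show ?thesis by linarith
  qed
qed

lemma Inv_b2_gt:
  assumes "Inv le A B i (j,k,jl,kl)" "cr_branch2 le A B (j,k,jl,kl)"
  shows "kl < k"
proof -
  from assms(1) have I: "j + k = i" "kl \<le> k" "i - length A \<le> kl"
     "kl = i - length A \<or> cr_branch1 le A B (i - kl, kl, 0, 0)" unfolding Inv_def by auto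
  have h2: "0 < k" "j < length A" using assms(2) unfolding cr_branch2_def by auto
  from I(4) show ?thesis
  proof
    assume "kl = i - length A" then show ?thesis using I h2 by linarith
  next
    assume b1: "cr_branch1 le A B (i - kl, kl, 0, 0)"
    show ?thesis
    proof (rule ccontr)
      assume "\<not> kl < k"
      hence "kl = k" using I by simp
      hence "i - kl = j" using I by simp
      with b1 \<open>kl = k\<close> have "cr_branch1 le A B (j, k, 0, 0)" by simp
      from chain[OF tp sA sB assms(2) this] show False by simp
    qed
  qed
qed

lemma Inv_bounds:
  assumes "Inv le A B i (j,k,jl,kl)" shows "j \<le> length A" "k \<le> length B"
  using assms iN unfolding Inv_def by auto

lemma Inv_init: "Inv le A B i (cr_init A B i)"
  using iN unfolding Inv_def cr_init_def by auto

lemma Dm_init: "Dm (cr_init A B i) \<le> min (length A) (length B)"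
  using iN unfolding Dm_def cr_init_def by auto

lemma step:
  assumes I: "Inv le A B i s"
  shows "Inv le A B i (cr_body le A B s)"
    "cr_cont le A B s \<Longrightarrow> Dm (cr_body le A B s) \<le> (Dm s + 1) div 2"
    "cr_cont le A B s \<Longrightarrow> Dm s \<le> 1 \<Longrightarrow> \<not> cr_cont le A B (cr_body le A B s)"
proof -
  obtain j k jl kl where s: "s = (j,k,jl,kl)" by (cases s) auto
  have I': "j + k = i" "jl \<le> j" "kl \<le> k" "i - length B \<le> jl" "i - length A \<le> kl"
     "jl = i - length B \<or> cr_branch2 le A B (jl, i - jl, 0, 0)"
     "kl = i - length A \<or> cr_branch1 le A B (i - kl, kl, 0, 0)"
    using I unfolding s Inv_def by auto
  have jm: "j \<le> length A" "k \<le> length B" using Inv_bounds I s by auto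
  have "Inv le A B i (cr_body le A B s) \<and> (cr_cont le A B s \<longrightarrow> Dm (cr_body le A B s) \<le> (Dm s + 1) div 2)
     \<and> (cr_cont le A B s \<longrightarrow> Dm s \<le> 1 \<longrightarrow> \<not> cr_cont le A B (cr_body le A B s))"
  proof (cases "cr_branch1 le A B s")
    case True
    have g: "jl < j" using Inv_b1_gt I True s by simp
    define d where "d = (j - jl + 1) div 2"
    have d: "1 \<le> d" "d \<le> j - jl" using half2 g unfolding d_def by auto
    have body: "cr_body le A B s = (j - d, k + d, jl, k)" using True unfolding s cr_body_def d_def by (simp add: Let_def)
    have b1: "cr_branch1 le A B (i - k, k, 0, 0)" using True I' unfolding s
      by (metis add_diff_cancel_right' branch_indep(1))
    have inv: "Inv le A B i (j - d, k + d, jl, k)"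
      using I' d b1 unfolding Inv_def by auto
    have dm: "Dm (j - d, k + d, jl, k) \<le> (Dm s + 1) div 2"
    proof -
      have x: "j - jl \<le> Dm s" unfolding Dm_def s by simp
      have "d \<le> (Dm s + 1) div 2" unfolding d_def using div_le_mono x by simp
      moreover have "(j - jl) - d \<le> d" unfolding d_def by (rule half1)
      ultimately show ?thesis unfolding Dm_def using d by auto
    qed
    have trm: "\<not> cr_cont le A B (j - d, k + d, jl, k)" if "Dm s \<le> 1"
    proof -
      have "j - jl \<le> 1" using that unfolding Dm_def s by auto
      hence dd: "d = 1" "j = jl + 1" using d by auto
      have "\<not> cr_branch1 le A B (j - d, k + d, jl, k)"
        using Inv_b1_gt[OF inv] dd by auto
      moreover have "\<not> cr_branch2 le A B (j - d, k + d, jl, k)"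
        using True dd unfolding s cr_branch1_def cr_branch2_def by auto
      ultimately show ?thesis unfolding cr_cont_def by simp
    qed
    show ?thesis using inv dm trm body by simp
  next
    case F1: False
    show ?thesis
    proof (cases "cr_branch2 le A B s")
      case True
      have g: "kl < k" using Inv_b2_gt I True s by simp
      define d where "d = (k - kl + 1) div 2"
      have d: "1 \<le> d" "d \<le> k - kl" using half2 g unfolding d_def by auto
      have body: "cr_body le A B s = (j + d, k - d, j, kl)" using True F1 unfolding s cr_body_def d_def by (simp add: Let_def)
      have b2: "cr_branch2 le A B (j, i - j, 0, 0)" using True I' unfolding s
        by (metis add_diff_cancel_left' branch_indep(2))
      have inv: "Inv le A B i (j + d, k - d, j, kl)"
        using I' d b2 jm unfolding Inv_def by auto
      have dm: "Dm (j + d, k - d, j, kl) \<le> (Dm s + 1) div 2"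
      proof -
        have x: "k - kl \<le> Dm s" unfolding Dm_def s by simp
        have "d \<le> (Dm s + 1) div 2" unfolding d_def using div_le_mono x by simp
        moreover have "(k - kl) - d \<le> d" unfolding d_def by (rule half1)
        ultimately show ?thesis unfolding Dm_def using d by auto
      qed
      have trm: "\<not> cr_cont le A B (j + d, k - d, j, kl)" if "Dm s \<le> 1"
      proof -
        have "k - kl \<le> 1" using that unfolding Dm_def s by auto
        hence dd: "d = 1" "k = kl + 1" using d by auto
        have "\<not> cr_branch2 le A B (j + d, k - d, j, kl)"
          using Inv_b2_gt[OF inv] dd by auto
        moreover have "\<not> cr_branch1 le A B (j + d, k - d, j, kl)"
          using True dd unfolding s cr_branch1_def cr_branch2_def by auto
        ultimately show ?thesis unfolding cr_cont_def by simp
      qed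
      show ?thesis using inv dm trm body by simp
    next
      case False
      then show ?thesis using F1 I unfolding cr_cont_def cr_body_def s by simp
    qed
  qed
  then show "Inv le A B i (cr_body le A B s)"
    "cr_cont le A B s \<Longrightarrow> Dm (cr_body le A B s) \<le> (Dm s + 1) div 2"
    "cr_cont le A B s \<Longrightarrow> Dm s \<le> 1 \<Longrightarrow> \<not> cr_cont le A B (cr_body le A B s)" by auto
qed

end



context
  fixes le and A B :: "'a list" and i
  assumes tp: "total_preorder le" and sA: "sorted_wrt le A" and sB: "sorted_wrt le B"
    and iN: "i \<le> length A + length B"
begin

abbreviation st :: "nat \<Rightarrow> cr_state" where
  "st t \<equiv> (cr_body le A B ^^ t) (cr_init A B i)"

lemma st_Inv: "Inv le A B i (st t)"
  by (induction t) (auto simp: Inv_init[OF tp sA sB iN] step(1)[OF tp sA sB iN])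

lemma st_cont_prev: "cr_cont le A B (st (Suc t)) \<Longrightarrow> cr_cont le A B (st t)"
proof (rule ccontr)
  assume a: "cr_cont le A B (st (Suc t))" "\<not> cr_cont le A B (st t)"
  hence "cr_body le A B (st t) = st t" unfolding cr_body_def cr_cont_def by (auto split: prod.splits)
  with a show False by simp
qed

lemma st_Dm: "cr_cont le A B (st t) \<Longrightarrow> Dm (st t) \<le> Dm (cr_init A B i) div 2^t + 1"
proof (induction t)
  case 0 then show ?case by simp
next
  case (Suc t)
  have c: "cr_cont le A B (st t)" using st_cont_prev Suc.prems by blast
  have "Dm (st (Suc t)) \<le> (Dm (st t) + 1) div 2"
    using step(2)[OF tp sA sB iN st_Inv c] by simp
  also have "\<dots> \<le> (Dm (cr_init A B i) div 2^t + 2) div 2"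
    using Suc.IH[OF c] div_le_mono by simp
  also have "\<dots> = Dm (cr_init A B i) div 2^t div 2 + 1" by simp
  also have "\<dots> = Dm (cr_init A B i) div 2^(Suc t) + 1"
    by (metis div_mult2_eq mult.commute power_Suc)
  finally show ?case .
qed

lemma st_pow: "cr_cont le A B (st (Suc t)) \<Longrightarrow> 2^t \<le> Dm (cr_init A B i)"
proof -
  assume a: "cr_cont le A B (st (Suc t))"
  have c: "cr_cont le A B (st t)" using st_cont_prev a by blast
  have "2 \<le> Dm (st t)"
  proof (rule ccontr)
    assume "\<not> 2 \<le> Dm (st t)"
    with step(3)[OF tp sA sB iN st_Inv c] a show False by simp
  qed
  with st_Dm[OF c] have "1 \<le> Dm (cr_init A B i) div 2^t" by linarith
  then show ?thesis by (metis Suc_le_eq One_nat_def div_greater_zero_iff)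
qed

lemma st_term: "\<exists>t. \<not> cr_cont le A B (st t)"
proof -
  have "\<not> cr_cont le A B (st (Suc (Dm (cr_init A B i))))"
    using st_pow[of "Dm (cr_init A B i)"] less_exp[of "Dm (cr_init A B i)"] by linarith
  then show ?thesis by blast
qed

lemma co_rank_main:
  "\<exists>j k. co_rank le i A B = Some (j,k) \<and> j + k = i \<and> j \<le> length A \<and> k \<le> length B \<and> okp le A B j k
     \<and> real (co_rank_steps le i A B) \<le> log 2 (real (min (length A) (length B)) + 1) + 2"
proof -
  define S where "S = (LEAST t. \<not> cr_cont le A B (st t))"
  have nS: "\<not> cr_cont le A B (st S)" unfolding S_def using st_term by (rule LeastI_ex)
  have wo: "while_option (cr_cont le A B) (cr_body le A B) (cr_init A B i) = Some (st S)"
    unfolding while_option_def S_def using st_term by simp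
  obtain j k jl kl where sS: "st S = (j,k,jl,kl)" by (cases "st S") auto
  have I: "Inv le A B i (j,k,jl,kl)" using st_Inv[of S] sS by simp
  have jk: "j + k = i" "j \<le> length A" "k \<le> length B"
    using I Inv_bounds[OF tp sA sB iN I] unfolding Inv_def by auto
  have ok: "okp le A B j k" using nS sS jk unfolding cr_cont_def cr_branch1_def cr_branch2_def okp_def
    by auto
  have steps: "co_rank_steps le i A B = S" unfolding co_rank_steps_def S_def by simp
  have bound: "real S \<le> log 2 (real (min (length A) (length B)) + 1) + 2"
  proof (cases "S \<le> 1")
    case True
    have "0 \<le> log 2 (real (min (length A) (length B)) + 1)" by simp
    moreover have "real S \<le> 1" using True by simp
    ultimately show ?thesis by linarith
  next
    case False
    define t where "t = S - 2"
    have t: "S = Suc (Suc t)" unfolding t_def using False by linarith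
    have "cr_cont le A B (st (Suc t))" using not_less_Least[of "Suc t" "\<lambda>t. \<not> cr_cont le A B (st t)"] t S_def by simp
    hence "2^t \<le> Dm (cr_init A B i)" by (rule st_pow)
    also have "\<dots> \<le> min (length A) (length B)" by (rule Dm_init[OF tp sA sB iN])
    finally have "2^t \<le> min (length A) (length B)" .
    hence "real (2^t) \<le> real (min (length A) (length B))" by (simp only: of_nat_le_iff)
    moreover have "real (2^t) = (2::real)^t" by simp
    ultimately have "(2::real)^t \<le> real (min (length A) (length B)) + 1" by linarith
    hence "real t \<le> log 2 (real (min (length A) (length B)) + 1)" by (intro le_log_of_power) auto
    with t show ?thesis by simp
  qed
  show ?thesis using wo sS jk ok steps bound unfolding co_rank_def by simp
qed

end



lemma sb_le: "r \<le> p \<Longrightarrow> 1 \<le> p \<Longrightarrow> seg_bound N p r \<le> N"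
proof -
  assume "r \<le> p" "1 \<le> p"
  have "r * N div p \<le> p * N div p" by (intro div_le_mono mult_le_mono1) fact
  also have "\<dots> = N" using \<open>1 \<le> p\<close> by simp
  finally show ?thesis unfolding seg_bound_def .
qed

lemma sb_mono: "r \<le> r' \<Longrightarrow> seg_bound N p r \<le> seg_bound N p r'"
  unfolding seg_bound_def by (intro div_le_mono mult_le_mono1)

lemma nat_aux: "1 \<le> p \<Longrightarrow> u \<le> a + N \<Longrightarrow> a < v + p \<Longrightarrow> u - v < (N::nat) + p" by linarith

lemma sb_diff:
  assumes "1 \<le> p"
  shows "(seg_bound N p (Suc r) - seg_bound N p r) * p < N + p"
proof -
  define a where "a = r * N"
  have X: "(a + N) div p * p \<le> a + N" by (rule div_times_less_eq_dividend)
  have Y: "a < a div p * p + p"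
    using div_mult_mod_eq[of a p] mod_less_divisor[of p a] assms by linarith
  have e: "seg_bound N p (Suc r) = (a + N) div p" "seg_bound N p r = a div p"
    unfolding seg_bound_def a_def by (simp_all add: add.commute)
  show ?thesis unfolding e diff_mult_distrib by (rule nat_aux[OF assms X Y])
qed

lemma work_ceil:
  assumes "1 \<le> p" "w * p < N + p"
  shows "real w \<le> real_of_int \<lceil>real N / real p\<rceil>"
proof -
  have "real w * real p < real N + real p" using assms(2) by (metis of_nat_add of_nat_less_iff of_nat_mult)
  hence "real w < real N / real p + 1" using assms(1) by (simp add: field_simps)
  hence "int w \<le> \<lceil>real N / real p\<rceil>" unfolding le_ceiling_iff by simp
  then show ?thesis by (metis of_int_le_iff of_int_of_nat_eq)
qed

context
  fixes le and A B :: "'a list" and p :: nat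
  assumes tp: "total_preorder le" and sA: "sorted_wrt le A" and sB: "sorted_wrt le B"
    and p1: "1 \<le> p"
begin

lemma PE: "r \<le> p \<Longrightarrow> \<exists>j k. co_rank le (seg_bound (length A + length B) p r) A B = Some (j,k)
   \<and> pe_corank le A B p r = (j,k) \<and> j + k = seg_bound (length A + length B) p r
   \<and> j \<le> length A \<and> k \<le> length B \<and> okp le A B j k
   \<and> real (co_rank_steps le (seg_bound (length A + length B) p r) A B) \<le> log 2 (real (min (length A) (length B)) + 1) + 2"
  using co_rank_main[OF tp sA sB sb_le[OF _ p1]] unfolding pe_corank_def by fastforce

lemma SEG:
  assumes "r < p"
  obtains j0 k0 j1 k1 where "pe_corank le A B p r = (j0,k0)" "pe_corank le A B p (Suc r) = (j1,k1)"
    "j0 \<le> j1" "k0 \<le> k1" "j1 \<le> length A" "k1 \<le> length B"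
    "okp le A B j1 k1"
    "j0 + k0 = seg_bound (length A + length B) p r"
    "j1 + k1 = seg_bound (length A + length B) p (Suc r)"
    "pe_output le A B p r = stable_merge le (slice A j0 j1) (slice B k0 k1)"
    "pe_work le A B p r = (j1 - j0) + (k1 - k0)"
proof -
  obtain j0 k0 where h0: "pe_corank le A B p r = (j0,k0)" "j0 + k0 = seg_bound (length A + length B) p r"
    "j0 \<le> length A" "k0 \<le> length B" "okp le A B j0 k0" using PE[of r] assms by auto
  obtain j1 k1 where h1: "pe_corank le A B p (Suc r) = (j1,k1)" "j1 + k1 = seg_bound (length A + length B) p (Suc r)"
    "j1 \<le> length A" "k1 \<le> length B" "okp le A B j1 k1" using PE[of "Suc r"] assms by auto
  have m: "j0 \<le> j1 \<and> k0 \<le> k1"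
    using okp_mono[OF tp sA sB h0(5) h1(5) h0(3,4) h1(3,4)] h0(2) h1(2) sb_mono[of r "Suc r"] by simp
  show ?thesis
    apply (rule that[OF h0(1) h1(1)])
    using m h0 h1 unfolding pe_output_def pe_work_def by auto
qed

lemma tail: "r \<le> p \<Longrightarrow> pe_corank le A B p r = (j,k) \<Longrightarrow>
   stable_merge le (drop j A) (drop k B) = concat (map (pe_output le A B p) [r..<p])"
proof (induction r arbitrary: j k rule: inc_induct)
  case base
  obtain j' k' where h: "pe_corank le A B p p = (j',k')" "j' + k' = seg_bound (length A + length B) p p"
    "j' \<le> length A" "k' \<le> length B" using PE[of p] by auto
  have "seg_bound (length A + length B) p p = length A + length B" unfolding seg_bound_def using p1 by simp
  then have "j' = length A" "k' = length B" using h by linarith+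
  then show ?case using base h by simp
next
  case (step r)
  obtain j0 k0 j1 k1 where s: "pe_corank le A B p r = (j0,k0)" "pe_corank le A B p (Suc r) = (j1,k1)"
    "j0 \<le> j1" "k0 \<le> k1" "j1 \<le> length A" "k1 \<le> length B" "okp le A B j1 k1"
    "pe_output le A B p r = stable_merge le (slice A j0 j1) (slice B k0 k1)"
    using SEG[OF step(2)] by metis
  have jk: "j = j0" "k = k0" using s(1) step(4) by auto
  have ok: "okp le (drop j0 A) (drop k0 B) (j1 - j0) (k1 - k0)" using okp_drop[OF s(7) s(3,4,5,6)] .
  have sp: "stable_merge le (drop j0 A) (drop k0 B) =
      stable_merge le (take (j1 - j0) (drop j0 A)) (take (k1 - k0) (drop k0 B)) @
      stable_merge le (drop (j1 - j0) (drop j0 A)) (drop (k1 - k0) (drop k0 B))"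
    by (rule sm_split[OF tp sorted_wrt_drop[OF sA] sorted_wrt_drop[OF sB] _ _ ok]) (use s in auto)
  have d: "drop (j1 - j0) (drop j0 A) = drop j1 A" "drop (k1 - k0) (drop k0 B) = drop k1 B"
    using s(3,4) by auto
  have "[r..<p] = r # [Suc r..<p]" using step(2) by (simp add: upt_conv_Cons)
  then show ?case using sp d s(8) step(3)[OF s(2)] jk unfolding slice_def by simp
qed

lemma main1:
  "(\<forall>r \<le> p. co_rank le (seg_bound (length A + length B) p r) A B \<noteq> None)
    \<and> (\<forall>r < p. length (pe_output le A B p r)
           = seg_bound (length A + length B) p (Suc r) - seg_bound (length A + length B) p r)
    \<and> par_merge le A B p = stable_merge le A B
    \<and> (\<forall>r < p. real (pe_work le A B p r) \<le> \<lceil>real (length A + length B) / real p\<rceil>)"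
proof (intro conjI allI impI)
  fix r assume "r \<le> p" then show "co_rank le (seg_bound (length A + length B) p r) A B \<noteq> None"
    using PE by fastforce
next
  fix r assume r: "r < p"
  obtain j0 k0 j1 k1 where s: "pe_corank le A B p r = (j0,k0)" "pe_corank le A B p (Suc r) = (j1,k1)"
    "j0 \<le> j1" "k0 \<le> k1" "j1 \<le> length A" "k1 \<le> length B"
    "j0 + k0 = seg_bound (length A + length B) p r"
    "j1 + k1 = seg_bound (length A + length B) p (Suc r)"
    "pe_output le A B p r = stable_merge le (slice A j0 j1) (slice B k0 k1)"
    "pe_work le A B p r = (j1 - j0) + (k1 - k0)"
    using SEG[OF r] by metis
  show "length (pe_output le A B p r)
           = seg_bound (length A + length B) p (Suc r) - seg_bound (length A + length B) p r"
    using s unfolding slice_def by auto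
next
  have "pe_corank le A B p 0 = (0,0)" using PE[of 0] unfolding seg_bound_def by auto
  from tail[OF _ this] show "par_merge le A B p = stable_merge le A B" unfolding par_merge_def by simp
next
  fix r assume r: "r < p"
  obtain j0 k0 j1 k1 where s: "pe_corank le A B p r = (j0,k0)" "pe_corank le A B p (Suc r) = (j1,k1)"
    "j0 \<le> j1" "k0 \<le> k1" "j1 \<le> length A" "k1 \<le> length B"
    "j0 + k0 = seg_bound (length A + length B) p r"
    "j1 + k1 = seg_bound (length A + length B) p (Suc r)"
    "pe_output le A B p r = stable_merge le (slice A j0 j1) (slice B k0 k1)"
    "pe_work le A B p r = (j1 - j0) + (k1 - k0)"
    using SEG[OF r] by metis
  have "pe_work le A B p r = seg_bound (length A + length B) p (Suc r) - seg_bound (length A + length B) p r"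
    using s by auto
  then show "real (pe_work le A B p r) \<le> \<lceil>real (length A + length B) / real p\<rceil>"
    using work_ceil[OF p1 sb_diff[OF p1, of "length A + length B" r]] by simp
qed

lemma main2:
  assumes r: "r < p"
  shows "real (pe_time le A B p r) \<le> 6 * (real (length A + length B) / real p
                        + log 2 (real (min (length A) (length B)) + 1) + 1)"
proof -
  define L where "L = log 2 (real (min (length A) (length B)) + 1)"
  define N where "N = length A + length B"
  have L0: "0 \<le> L" unfolding L_def by simp
  have N0: "0 \<le> real N / real p" by simp
  have s1: "real (co_rank_steps le (seg_bound N p r) A B) \<le> L + 2"
    using PE[of r] r unfolding L_def N_def by auto
  have s2: "real (co_rank_steps le (seg_bound N p (Suc r)) A B) \<le> L + 2"
    using PE[of "Suc r"] r unfolding L_def N_def by auto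
  obtain j0 k0 j1 k1 where s: "pe_corank le A B p r = (j0,k0)" "pe_corank le A B p (Suc r) = (j1,k1)"
    "j0 \<le> j1" "k0 \<le> k1"
    "j0 + k0 = seg_bound (length A + length B) p r"
    "j1 + k1 = seg_bound (length A + length B) p (Suc r)"
    "pe_work le A B p r = (j1 - j0) + (k1 - k0)"
    using SEG[OF r] by metis
  have "pe_work le A B p r * p < N + p" using s sb_diff[OF p1, of N r] unfolding N_def by auto
  hence "real (pe_work le A B p r) * real p < real N + real p" by (metis of_nat_add of_nat_less_iff of_nat_mult)
  hence w: "real (pe_work le A B p r) < real N / real p + 1" using p1 by (simp add: field_simps)
  have "real (pe_time le A B p r) = 1 + real (co_rank_steps le (seg_bound N p r) A B)
      + real (co_rank_steps le (seg_bound N p (Suc r)) A B) + real (pe_work le A B p r)"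
    unfolding pe_time_def N_def by simp
  also have "\<dots> \<le> 6 * (real N / real p) + 6 * L + 6" using s1 s2 w L0 N0 by linarith
  also have "\<dots> = 6 * (real N / real p + L + 1)" by (simp add: algebra_simps)
  finally show ?thesis unfolding L_def N_def by simp
qed

end

theorem proposition2:
  shows "(\<forall>(le :: 'a \<Rightarrow> 'a \<Rightarrow> bool) A B p.
            total_preorder le \<and> sorted_wrt le A \<and> sorted_wrt le B \<and> 1 \<le> p \<longrightarrow>
              (\<forall>r \<le> p. co_rank le (seg_bound (length A + length B) p r) A B \<noteq> None)
            \<and> (\<forall>r < p. length (pe_output le A B p r)
                   = seg_bound (length A + length B) p (Suc r) - seg_bound (length A + length B) p r)
            \<and> par_merge le A B p = stable_merge le A B
            \<and> (\<forall>r < p. real (pe_work le A B p r) \<le> \<lceil>real (length A + length B) / real p\<rceil>))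
       \<and> (\<exists>c :: real. \<forall>(le :: 'a \<Rightarrow> 'a \<Rightarrow> bool) A B p.
            total_preorder le \<and> sorted_wrt le A \<and> sorted_wrt le B \<and> 1 \<le> p \<longrightarrow>
              (\<forall>r < p. real (pe_time le A B p r)
                 \<le> c * (real (length A + length B) / real p
                        + log 2 (real (min (length A) (length B)) + 1) + 1)))"
proof (rule conjI; (intro allI impI exI[of _ 6])?)
  fix le :: "'a \<Rightarrow> 'a \<Rightarrow> bool" and A B and p :: nat
  assume "total_preorder le \<and> sorted_wrt le A \<and> sorted_wrt le B \<and> 1 \<le> p"
  then show "(\<forall>r \<le> p. co_rank le (seg_bound (length A + length B) p r) A B \<noteq> None)
            \<and> (\<forall>r < p. length (pe_output le A B p r)
                   = seg_bound (length A + length B) p (Suc r) - seg_bound (length A + length B) p r)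
            \<and> par_merge le A B p = stable_merge le A B
            \<and> (\<forall>r < p. real (pe_work le A B p r) \<le> \<lceil>real (length A + length B) / real p\<rceil>)"
    using main1 by blast
next
  fix le :: "'a \<Rightarrow> 'a \<Rightarrow> bool" and A B and p r :: nat
  assume "total_preorder le \<and> sorted_wrt le A \<and> sorted_wrt le B \<and> 1 \<le> p" "r < p"
  then show "real (pe_time le A B p r) \<le> 6 * (real (length A + length B) / real p
                        + log 2 (real (min (length A) (length B)) + 1) + 1)"
    using main2 by blast
qed


end
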